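(* (i) $\mathrm{Box}(\Sigma_+)\setminus\mathrm{Box}(\Sigma^{es}_+)=\mathrm{Box}(\Sigma_-)\setminus\mathrm{Box}(\Sigma^{es}_-)$; moreover, for any $v$ in these sets, written $v=\sum_jq_jv_j$ with $0\le q_j<1$ and $q_j=0$ if $\mathbb R_{\ge0}v_j\not\prec\sigma(v)$, the minimal cone $\sigma(v)$ containing $v$ is the same in $\Sigma_+$ and $\Sigma_-$, and the associated $n$-tuples of roots of unity $(y^v_1,\dots,y^v_n)$, $y^v_j=e^{2\pi iq_j}$, are the same. (ii) For any $v\in\mathrm{Box}(\Sigma^{es}_+)$ with associated $y^v$ (computed in $\Sigma_+$) and any $t\in\mathcal I(y^v)$, the $n$-tuple $(y^v_1t^{h_1},\dots,y^v_nt^{h_n})$ equals $y^{v'}$ (computed in $\Sigma_-$) for some $v'\in\mathrm{Box}(\Sigma^{es}_-)$, i.e. determines the maximal ideal of $K_0(\mathbb P_{\Sigma_-},\mathbb C)$ corresponding to an element of $\mathrm{Box}(\Sigma^{es}_-)$; moreover every $n$-tuple $y^{v'}$ with $v'\in\mathrm{Box}(\Sigma^{es}_-)$ arises in this way for suitable $v\in\mathrm{Box}(\Sigma^{es}_+)$ and $t\in\mathcal I(y^v)$.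
   Context: $N\cong\mathbb Z^d$ lattice, $\mathcal A=\{v_1,\dots,v_n\}\subset N$ generating $N$ with a homomorphism $\mathrm h:N\to\mathbb Z$, $\mathrm h(v_j)=1$; $\mathbb L=\{l\in\mathbb Z^n:\sum l_jv_j=0\}$; $\Delta=\mathrm{Conv}(\mathcal A)$. $\Sigma_+,\Sigma_-$ are the simplicial fans supported on $\mathbb R_{\ge0}\Delta$ induced by two regular triangulations of $\Delta$ with vertices in $\mathcal A$ that are joined by an edge of the secondary polytope. There is a circuit $I\subset\mathcal A$ with a primitive relation $h=(h_1,\dots,h_n)\in\mathbb L$ ($\sum h_jv_j=0$, $I=\{v_j:h_j\ne0\}$), $I_\pm=\{v_j:\pm h_j>0\}$, such that, calling $\mathcal F\subset\mathcal A\setminus I$ separating if $\mathcal F\cup(I\setminus\{v\})$ generates a maximal cone of $\Sigma_\pm$ for every $v\in I_\pm$, $\Sigma_-$ is obtained from $\Sigma_+$ by replacing all maximal cones generated by $\mathcal F\cup(I\setminus\{v\})$, $v\in I_+$, with the cones generated by $\mathcal F\cup(I\setminus\{v\})$, $v\in I_-$, for all separating $\mathcal F$. Maximal cones of $\Sigma_\pm$ of the form $\mathcal F\cup(I\setminus\{v\})$ ($\mathcal F$ separating, $v\in I_\pm$) are called essential; $\Sigma^{es}_\pm(d)$ is the set of them. For a fan $\Sigma$, $\mathrm{Box}(\Sigma)$ is the set of $v\in N$ with $v=\sum q_jv_j$, $0\le q_j<1$, $q_j=0$ unless $v_j$ spans a ray of a fixed maximal cone; $\sigma(v)$ is the smallest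 cone containing $v$; $y^v_j=e^{2\pi iq_j}$. $\mathrm{Box}(\Sigma^{es}_\pm)$ is the set of $v\in\mathrm{Box}(\Sigma_\pm)$ whose $\sigma(v)$ is a face of some essential maximal cone. For $r\in(\mathbb C^* )^n$, $\mathcal I(r)$ is the set of $t\in\mathbb C^*$ such that $r_jt^{h_j}=1$ for some $j$ with $v_j\in I_-$. (The maximal ideals of $K_0(\mathbb P_{\Sigma_-},\mathbb C)=\mathbb C[R_j^{\pm1}]/(\text{relations})$ are $(R_j-y^{v'}_j)_j$, $v'\in\mathrm{Box}(\Sigma_-)$.) *)

theory Defs
  imports "HOL-Analysis.Analysis"
begin

text \<open>Lattice N = int^'d (d = CARD('d)); the configuration A is given by the
  vectors v 0, ..., v (n-1).  Cones, fans and triangulations are encoded through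
  index sets S of {..<n}.\<close>

definition rv :: "int^'d \<Rightarrow> real^'d" where
  "rv x = (\<chi> i. real_of_int (x$i))"

definition rcone :: "(nat \<Rightarrow> int^'d) \<Rightarrow> nat set \<Rightarrow> (real^'d) set" where
  "rcone v F = {y. \<exists>a. (\<forall>j\<in>F. 0 \<le> a j) \<and> y = (\<Sum>j\<in>F. a j *\<^sub>R rv (v j))}"

definition lin_indep_idx :: "(nat \<Rightarrow> int^'d) \<Rightarrow> nat set \<Rightarrow> bool" where
  "lin_indep_idx v F \<longleftrightarrow>
     (\<forall>c. (\<Sum>j\<in>F. c j *\<^sub>R rv (v j)) = 0 \<longrightarrow> (\<forall>j\<in>F. c j = 0))"

text \<open>A triangulation of Delta = Conv(A) with vertices in A, given by the set of
  index sets of its maximal simplices (equivalently, the maximal cones of the fan).\<close>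
definition is_triangulation :: "(nat \<Rightarrow> int^'d::finite) \<Rightarrow> nat \<Rightarrow> nat set set \<Rightarrow> bool" where
  "is_triangulation v n T \<longleftrightarrow>
     (\<forall>S\<in>T. S \<subseteq> {..<n} \<and> card S = CARD('d) \<and> lin_indep_idx v S) \<and>
     \<Union>(rcone v ` T) = rcone v {..<n} \<and>
     (\<forall>S\<in>T. \<forall>S'\<in>T. rcone v S \<inter> rcone v S' = rcone v (S \<inter> S'))"

definition is_regular_triangulation :: "(nat \<Rightarrow> int^'d::finite) \<Rightarrow> nat \<Rightarrow> nat set set \<Rightarrow> bool" where
  "is_regular_triangulation v n T \<longleftrightarrow> is_triangulation v n T \<and>
     (\<exists>\<omega>::nat \<Rightarrow> real. \<forall>S\<in>T. \<exists>l::real^'d.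
        (\<forall>j\<in>S. l \<bullet> rv (v j) = \<omega> j) \<and> (\<forall>j<n. j \<notin> S \<longrightarrow> l \<bullet> rv (v j) < \<omega> j))"

text \<open>GKZ vector (up to the constant factor d!, the volume of conv(0, simplex)
  in R^d is proportional to the normalized volume of the simplex in Delta).\<close>
definition gkz :: "(nat \<Rightarrow> int^'d::finite) \<Rightarrow> nat set set \<Rightarrow> nat \<Rightarrow> real" where
  "gkz v T j = (\<Sum>S\<in>{S\<in>T. j \<in> S}. measure lebesgue (convex hull (insert 0 ((rv \<circ> v) ` S))))"

text \<open>T1, T2 are joined by an edge of the secondary polytope (convex hull of the GKZ
  vectors of all triangulations).\<close>
definition secondary_edge :: "(nat \<Rightarrow> int^'d::finite) \<Rightarrow> nat \<Rightarrow> nat set set \<Rightarrow> nat set set \<Rightarrow> bool" where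
  "secondary_edge v n T1 T2 \<longleftrightarrow>
     (\<exists>j<n. gkz v T1 j \<noteq> gkz v T2 j) \<and>
     (\<exists>\<psi>::nat \<Rightarrow> real.
        (\<forall>T. is_triangulation v n T \<longrightarrow>
              (\<Sum>j<n. \<psi> j * gkz v T j) \<le> (\<Sum>j<n. \<psi> j * gkz v T1 j)) \<and>
        (\<Sum>j<n. \<psi> j * gkz v T2 j) = (\<Sum>j<n. \<psi> j * gkz v T1 j) \<and>
        (\<forall>T. is_triangulation v n T \<and>
              (\<Sum>j<n. \<psi> j * gkz v T j) = (\<Sum>j<n. \<psi> j * gkz v T1 j) \<longrightarrow>
              (\<exists>\<mu>\<in>{0..1}. \<forall>j<n. gkz v T j = (1 - \<mu>) * gkz v T1 j + \<mu> * gkz v T2 j)))"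

definition in_L :: "(nat \<Rightarrow> int^'d) \<Rightarrow> nat \<Rightarrow> (nat \<Rightarrow> int) \<Rightarrow> bool" where
  "in_L v n l \<longleftrightarrow> (\<forall>j\<ge>n. l j = 0) \<and> (\<Sum>j<n. l j *s v j) = 0"

definition primitive_in_L :: "(nat \<Rightarrow> int^'d) \<Rightarrow> nat \<Rightarrow> (nat \<Rightarrow> int) \<Rightarrow> bool" where
  "primitive_in_L v n h \<longleftrightarrow> in_L v n h \<and> h \<noteq> (\<lambda>_. 0) \<and>
     (\<forall>(k::int) l. in_L v n l \<and> h = (\<lambda>j. k * l j) \<longrightarrow> \<bar>k\<bar> = 1)"

definition is_circuit :: "(nat \<Rightarrow> int^'d) \<Rightarrow> nat set \<Rightarrow> bool" where
  "is_circuit v I \<longleftrightarrow> \<not> lin_indep_idx v I \<and> (\<forall>j\<in>I. lin_indep_idx v (I - {j}))"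

definition Iplus :: "(nat \<Rightarrow> int) \<Rightarrow> nat set" where "Iplus h = {j. h j > 0}"
definition Iminus :: "(nat \<Rightarrow> int) \<Rightarrow> nat set" where "Iminus h = {j. h j < 0}"

definition separating :: "nat \<Rightarrow> (nat \<Rightarrow> int) \<Rightarrow> nat set set \<Rightarrow> nat set set \<Rightarrow> nat set \<Rightarrow> bool" where
  "separating n h Tp Tm F \<longleftrightarrow> F \<subseteq> {..<n} - {j. h j \<noteq> 0} \<and>
     (\<forall>j\<in>Iplus h. F \<union> ({j. h j \<noteq> 0} - {j}) \<in> Tp) \<and>
     (\<forall>j\<in>Iminus h. F \<union> ({j. h j \<noteq> 0} - {j}) \<in> Tm)"

definition essential_plus :: "nat \<Rightarrow> (nat \<Rightarrow> int) \<Rightarrow> nat set set \<Rightarrow> nat set set \<Rightarrow> nat set set" where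
  "essential_plus n h Tp Tm =
     {F \<union> ({i. h i \<noteq> 0} - {j}) | F j. separating n h Tp Tm F \<and> j \<in> Iplus h}"

definition essential_minus :: "nat \<Rightarrow> (nat \<Rightarrow> int) \<Rightarrow> nat set set \<Rightarrow> nat set set \<Rightarrow> nat set set" where
  "essential_minus n h Tp Tm =
     {F \<union> ({i. h i \<noteq> 0} - {j}) | F j. separating n h Tp Tm F \<and> j \<in> Iminus h}"

definition box_rep :: "(nat \<Rightarrow> int^'d) \<Rightarrow> nat \<Rightarrow> nat set set \<Rightarrow> int^'d \<Rightarrow> (nat \<Rightarrow> real) \<Rightarrow> bool" where
  "box_rep v n T x q \<longleftrightarrow> (\<exists>S\<in>T. (\<forall>j. 0 \<le> q j \<and> q j < 1) \<and> (\<forall>j. j \<notin> S \<longrightarrow> q j = 0) \<and>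
      rv x = (\<Sum>j<n. q j *\<^sub>R rv (v j)))"

definition Box :: "(nat \<Rightarrow> int^'d) \<Rightarrow> nat \<Rightarrow> nat set set \<Rightarrow> (int^'d) set" where
  "Box v n T = {x. \<exists>q. box_rep v n T x q}"

definition fan_cones :: "(nat \<Rightarrow> int^'d) \<Rightarrow> nat set set \<Rightarrow> (real^'d) set set" where
  "fan_cones v T = {rcone v F | F. \<exists>S\<in>T. F \<subseteq> S}"

definition sigma :: "(nat \<Rightarrow> int^'d) \<Rightarrow> nat set set \<Rightarrow> int^'d \<Rightarrow> (real^'d) set" where
  "sigma v T x = \<Inter>{C \<in> fan_cones v T. rv x \<in> C}"

definition Box_es :: "(nat \<Rightarrow> int^'d) \<Rightarrow> nat \<Rightarrow> nat set set \<Rightarrow> nat set set \<Rightarrow> (int^'d) set" where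
  "Box_es v n T E = {x \<in> Box v n T. \<exists>S\<in>E. sigma v T x face_of rcone v S}"

definition yv :: "(nat \<Rightarrow> real) \<Rightarrow> nat \<Rightarrow> complex" where
  "yv q j = cis (2 * pi * q j)"

definition Ical :: "nat \<Rightarrow> (nat \<Rightarrow> int) \<Rightarrow> (nat \<Rightarrow> complex) \<Rightarrow> complex set" where
  "Ical n h r = {t. t \<noteq> 0 \<and> (\<exists>j<n. h j < 0 \<and> r j * t powi h j = 1)}"

end

theory Submission
  imports Defs "HOL-Library.Real_Mod"
begin

lemma rv_add: "rv (x + y) = rv x + rv y"
  by (simp add: rv_def vec_eq_iff)
lemma rv_diff: "rv (x - y) = rv x - rv y"
  by (simp add: rv_def vec_eq_iff)
lemma rv_zero: "rv 0 = 0"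
  by (simp add: rv_def vec_eq_iff)
lemma rv_smult: "rv (k *s x) = of_int k *\<^sub>R rv x"
  by (simp add: rv_def vec_eq_iff)
lemma rv_sum: "rv (sum f A) = (\<Sum>j\<in>A. rv (f j))"
  by (induction A rule: infinite_finite_induct) (auto simp: rv_zero rv_add)

lemma lin_unique:
  assumes "lin_indep_idx v S"
    and "(\<Sum>j\<in>S. a j *\<^sub>R rv (v j)) = (\<Sum>j\<in>S. b j *\<^sub>R rv (v j))" and "j \<in> S"
  shows "a j = b j"
proof -
  have "(\<Sum>j\<in>S. (a j - b j) *\<^sub>R rv (v j)) = 0"
    using assms(2) by (simp add: scaleR_diff_left sum_subtractf)
  then show ?thesis using assms(1,3) unfolding lin_indep_idx_def by force
qed

definition fanprop :: "(nat \<Rightarrow> int^'d) \<Rightarrow> nat \<Rightarrow> nat set set \<Rightarrow> bool" where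
  "fanprop v n T \<longleftrightarrow> (\<forall>S\<in>T. S \<subseteq> {..<n} \<and> lin_indep_idx v S) \<and>
     (\<forall>S\<in>T. \<forall>S'\<in>T. rcone v S \<inter> rcone v S' = rcone v (S \<inter> S'))"

lemma tri_fanprop: "is_triangulation v n T \<Longrightarrow> fanprop v n T"
  by (auto simp: is_triangulation_def fanprop_def)

lemma sum_restrict:
  assumes "S \<subseteq> {..<n}" "\<forall>j. j \<notin> S \<longrightarrow> a j = 0"
  shows "(\<Sum>j<(n::nat). a j *\<^sub>R (w j::'a::real_vector)) = (\<Sum>j\<in>S. a j *\<^sub>R w j)"
  by (rule sum.mono_neutral_right) (use assms in auto)

lemma tri_unique:
  assumes fp: "fanprop v n T" and ST: "S \<in> T" "S' \<in> T"
    and a0: "\<forall>j. 0 \<le> a j" and b0: "\<forall>j. 0 \<le> b j"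
    and aS: "\<forall>j. j \<notin> S \<longrightarrow> a j = 0" and bS: "\<forall>j. j \<notin> S' \<longrightarrow> b j = 0"
    and eq: "(\<Sum>j<n. a j *\<^sub>R rv (v j)) = (\<Sum>j<n. b j *\<^sub>R rv (v j))"
  shows "a j = b j"
proof -
  have S: "S \<subseteq> {..<n}" "lin_indep_idx v S" "S' \<subseteq> {..<n}" "lin_indep_idx v S'"
    using fp ST by (auto simp: fanprop_def)
  have fin: "finite S" "finite S'" using S finite_subset by auto
  define y where "y = (\<Sum>j<n. a j *\<^sub>R rv (v j))"
  have ya: "y = (\<Sum>j\<in>S. a j *\<^sub>R rv (v j))" unfolding y_def by (rule sum_restrict) (use S aS in auto)
  have yb: "y = (\<Sum>j\<in>S'. b j *\<^sub>R rv (v j))" unfolding y_def eq by (rule sum_restrict) (use S bS in auto)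
  have "y \<in> rcone v S" unfolding rcone_def using ya a0 by (intro CollectI exI[of _ a]) simp
  moreover have "y \<in> rcone v S'" unfolding rcone_def using yb b0 by (intro CollectI exI[of _ b]) simp
  ultimately have "y \<in> rcone v (S \<inter> S')" using fp ST unfolding fanprop_def by blast
  then obtain c where yc: "y = (\<Sum>j\<in>S \<inter> S'. c j *\<^sub>R rv (v j))" unfolding rcone_def by blast
  define c' where "c' j = (if j \<in> S \<inter> S' then c j else 0)" for j
  have c1: "y = (\<Sum>j\<in>S. c' j *\<^sub>R rv (v j))"
  proof -
    have "(\<Sum>j\<in>S. c' j *\<^sub>R rv (v j)) = (\<Sum>j\<in>S \<inter> S'. c' j *\<^sub>R rv (v j))"
      by (rule sum.mono_neutral_right) (use fin in \<open>auto simp: c'_def\<close>)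
    also have "\<dots> = (\<Sum>j\<in>S \<inter> S'. c j *\<^sub>R rv (v j))" by (rule sum.cong) (auto simp: c'_def)
    finally show ?thesis using yc by simp
  qed
  have c2: "y = (\<Sum>j\<in>S'. c' j *\<^sub>R rv (v j))"
  proof -
    have "(\<Sum>j\<in>S'. c' j *\<^sub>R rv (v j)) = (\<Sum>j\<in>S \<inter> S'. c' j *\<^sub>R rv (v j))"
      by (rule sum.mono_neutral_right) (use fin in \<open>auto simp: c'_def\<close>)
    also have "\<dots> = (\<Sum>j\<in>S \<inter> S'. c j *\<^sub>R rv (v j))" by (rule sum.cong) (auto simp: c'_def)
    finally show ?thesis using yc by simp
  qed
  have A: "a j = c' j" if "j \<in> S" for j
    by (rule lin_unique[OF S(2) _ that]) (rule trans[OF ya[symmetric] c1])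
  have B: "b j = c' j" if "j \<in> S'" for j
    by (rule lin_unique[OF S(4) _ that]) (rule trans[OF yb[symmetric] c2])
  show ?thesis using A B aS bS by (cases "j \<in> S"; cases "j \<in> S'") (auto simp: c'_def)
qed

lemma rcone_mono:
  assumes "finite F" "P \<subseteq> F"
  shows "rcone v P \<subseteq> rcone v F"
proof
  fix y assume "y \<in> rcone v P"
  then obtain a where a: "\<forall>j\<in>P. 0 \<le> a j" "y = (\<Sum>j\<in>P. a j *\<^sub>R rv (v j))"
    unfolding rcone_def by blast
  define b where "b j = (if j \<in> P then a j else 0)" for j
  have "(\<Sum>j\<in>F. b j *\<^sub>R rv (v j)) = (\<Sum>j\<in>P. b j *\<^sub>R rv (v j))"
    by (rule sum.mono_neutral_right) (use assms in \<open>auto simp: b_def\<close>)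
  also have "\<dots> = y" unfolding a(2) by (rule sum.cong) (auto simp: b_def)
  finally have "y = (\<Sum>j\<in>F. b j *\<^sub>R rv (v j))" by simp
  moreover have "\<forall>j\<in>F. 0 \<le> b j" using a(1) by (auto simp: b_def)
  ultimately show "y \<in> rcone v F" unfolding rcone_def by blast
qed

lemma in_sigma: "rv x \<in> sigma v T x"
  unfolding sigma_def by (rule InterI) simp

lemma sigma_eq:
  assumes fp: "fanprop v n T" and ST: "S \<in> T"
    and q0: "\<forall>j. 0 \<le> q j" and qS: "\<forall>j. j \<notin> S \<longrightarrow> q j = 0"
    and x: "rv x = (\<Sum>j<n. q j *\<^sub>R rv (v j))"
  shows "sigma v T x = rcone v {j. q j \<noteq> 0}"
proof -
  define P where "P = {j. q j \<noteq> 0}"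
  have Sn: "S \<subseteq> {..<n}" using fp ST by (auto simp: fanprop_def)
  have PS: "P \<subseteq> S" using qS by (auto simp: P_def)
  have "rv x = (\<Sum>j\<in>P. q j *\<^sub>R rv (v j))" unfolding x
    by (rule sum_restrict) (use PS Sn in \<open>auto simp: P_def\<close>)
  then have rx: "rv x \<in> rcone v P" unfolding rcone_def using q0 by (intro CollectI exI[of _ q]) simp
  have fc: "rcone v P \<in> fan_cones v T" unfolding fan_cones_def using ST PS by blast
  have "sigma v T x \<subseteq> rcone v P" unfolding sigma_def by (rule Inter_lower) (use rx fc in simp)
  moreover have "rcone v P \<subseteq> sigma v T x" unfolding sigma_def
  proof (rule Inter_greatest)
    fix C assume "C \<in> {C \<in> fan_cones v T. rv x \<in> C}"
    then have "C \<in> fan_cones v T" "rv x \<in> C" by auto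
    then obtain F S' where C: "C = rcone v F" "S' \<in> T" "F \<subseteq> S'" "rv x \<in> C"
      unfolding fan_cones_def by auto
    have S'n: "S' \<subseteq> {..<n}" using fp C(2) by (auto simp: fanprop_def)
    have finF: "finite F" using finite_subset[OF C(3) finite_subset[OF S'n finite_lessThan]] .
    obtain c where c: "\<forall>j\<in>F. 0 \<le> c j" "rv x = (\<Sum>j\<in>F. c j *\<^sub>R rv (v j))"
      using C(1,4) unfolding rcone_def by blast
    define b where "b j = (if j \<in> F then c j else 0)" for j
    have "(\<Sum>j<n. b j *\<^sub>R rv (v j)) = (\<Sum>j\<in>F. b j *\<^sub>R rv (v j))"
      by (rule sum_restrict) (use C(3) S'n in \<open>auto simp: b_def\<close>)
    also have "\<dots> = rv x" unfolding c(2) by (rule sum.cong) (auto simp: b_def)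
    finally have eqb: "(\<Sum>j<n. q j *\<^sub>R rv (v j)) = (\<Sum>j<n. b j *\<^sub>R rv (v j))" using x by simp
    have "q j = b j" for j
      by (rule tri_unique[OF fp ST C(2) q0 _ qS _ eqb]) (use c(1) C(3) in \<open>auto simp: b_def\<close>)
    then have "P \<subseteq> F" by (auto simp: P_def b_def split: if_splits)
    then show "rcone v P \<subseteq> C" using rcone_mono[OF finF] C(1) by blast
  qed
  ultimately have "sigma v T x = rcone v P" by (rule equalityI)
  then show ?thesis unfolding P_def .
qed

lemma face_aux:
  assumes li: "lin_indep_idx v S" and fin: "finite S" and PS: "P \<subseteq> S"
    and al: "\<forall>j\<in>S. 0 \<le> al j" and be: "\<forall>j\<in>S. 0 \<le> be j" and u: "0 < u" "u < 1"
    and z: "(1 - u) *\<^sub>R (\<Sum>j\<in>S. al j *\<^sub>R rv (v j)) + u *\<^sub>R (\<Sum>j\<in>S. be j *\<^sub>R rv (v j)) \<in> rcone v P"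
  shows "(\<Sum>j\<in>S. al j *\<^sub>R rv (v j)) \<in> rcone v P"
proof -
  obtain g where g: "\<forall>j\<in>P. 0 \<le> g j"
    "(1 - u) *\<^sub>R (\<Sum>j\<in>S. al j *\<^sub>R rv (v j)) + u *\<^sub>R (\<Sum>j\<in>S. be j *\<^sub>R rv (v j)) = (\<Sum>j\<in>P. g j *\<^sub>R rv (v j))"
    using z unfolding rcone_def by blast
  define g' where "g' j = (if j \<in> P then g j else 0)" for j
  have "(\<Sum>j\<in>S. g' j *\<^sub>R rv (v j)) = (\<Sum>j\<in>P. g' j *\<^sub>R rv (v j))"
    by (rule sum.mono_neutral_right) (use fin PS in \<open>auto simp: g'_def\<close>)
  also have "\<dots> = (\<Sum>j\<in>P. g j *\<^sub>R rv (v j))" by (rule sum.cong) (auto simp: g'_def)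
  finally have e1: "(\<Sum>j\<in>S. g' j *\<^sub>R rv (v j)) = (\<Sum>j\<in>P. g j *\<^sub>R rv (v j))" .
  have e2: "(1 - u) *\<^sub>R (\<Sum>j\<in>S. al j *\<^sub>R rv (v j)) + u *\<^sub>R (\<Sum>j\<in>S. be j *\<^sub>R rv (v j))
     = (\<Sum>j\<in>S. ((1 - u) * al j + u * be j) *\<^sub>R rv (v j))"
    by (simp add: scaleR_sum_right scaleR_add_left sum.distrib)
  have coef: "(1 - u) * al j + u * be j = g' j" if "j \<in> S" for j
    by (rule lin_unique[OF li _ that]) (use e1 e2 g(2) in simp)
  have al0: "al j = 0" if "j \<in> S" "j \<notin> P" for j
  proof -
    have "(1 - u) * al j + u * be j = 0" using coef[OF that(1)] that(2) by (simp add: g'_def)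
    moreover have "0 \<le> (1 - u) * al j" "0 \<le> u * be j" using al be u that(1) by auto
    ultimately have "(1 - u) * al j = 0" by linarith
    then show ?thesis using u by simp
  qed
  have "(\<Sum>j\<in>S. al j *\<^sub>R rv (v j)) = (\<Sum>j\<in>P. al j *\<^sub>R rv (v j))"
    by (rule sum.mono_neutral_right) (use fin PS al0 in auto)
  moreover have "\<forall>j\<in>P. 0 \<le> al j" using al PS by blast
  ultimately show ?thesis unfolding rcone_def by blast
qed

lemma rcone_face:
  assumes li: "lin_indep_idx v S" and fin: "finite S" and PS: "P \<subseteq> S"
  shows "rcone v P face_of rcone v S"
  unfolding face_of_def
proof (intro conjI ballI impI)
  show "rcone v P \<subseteq> rcone v S" by (rule rcone_mono[OF fin PS])
  show "convex (rcone v P)"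
  proof (rule convexI)
    fix x y and a b :: real
    assume xy: "x \<in> rcone v P" "y \<in> rcone v P" and ab: "0 \<le> a" "0 \<le> b" "a + b = 1"
    obtain c where c: "\<forall>j\<in>P. 0 \<le> c j" "x = (\<Sum>j\<in>P. c j *\<^sub>R rv (v j))"
      using xy(1) unfolding rcone_def by auto
    obtain d where d: "\<forall>j\<in>P. 0 \<le> d j" "y = (\<Sum>j\<in>P. d j *\<^sub>R rv (v j))"
      using xy(2) unfolding rcone_def by auto
    have e: "a *\<^sub>R x + b *\<^sub>R y = (\<Sum>j\<in>P. (a * c j + b * d j) *\<^sub>R rv (v j))"
      unfolding c(2) d(2) by (simp add: scaleR_sum_right scaleR_add_left sum.distrib)
    have "\<forall>j\<in>P. 0 \<le> a * c j + b * d j" using c(1) d(1) ab by (auto intro!: add_nonneg_nonneg mult_nonneg_nonneg)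
    with e show "a *\<^sub>R x + b *\<^sub>R y \<in> rcone v P" unfolding rcone_def by (intro CollectI exI[of _ "\<lambda>j. a * c j + b * d j"]) simp
  qed
  fix a b x assume a: "a \<in> rcone v S" and b: "b \<in> rcone v S" and x: "x \<in> rcone v P"
    and seg: "x \<in> open_segment a b"
  obtain al where al: "\<forall>j\<in>S. 0 \<le> al j" "a = (\<Sum>j\<in>S. al j *\<^sub>R rv (v j))"
    using a unfolding rcone_def by auto
  obtain be where be: "\<forall>j\<in>S. 0 \<le> be j" "b = (\<Sum>j\<in>S. be j *\<^sub>R rv (v j))"
    using b unfolding rcone_def by auto
  obtain u where u: "0 < u" "u < 1" "x = (1 - u) *\<^sub>R a + u *\<^sub>R b"
    using seg by (auto simp: in_segment)
  show "a \<in> rcone v P"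
    using face_aux[OF li fin PS al(1) be(1) u(1,2)] x u(3) al(2) be(2) by simp
  have "x = (1 - (1 - u)) *\<^sub>R b + (1 - u) *\<^sub>R a" using u(3) by simp
  then show "b \<in> rcone v P"
    using face_aux[OF li fin PS be(1) al(1), of "1 - u"] x u(1,2) al(2) be(2) by simp
qed


lemma smult_Suc: "(of_nat (Suc m) :: int) *s x = of_nat m *s x + x"
  by (simp add: vec_eq_iff algebra_simps)

lemma ht_facts:
  assumes add: "\<forall>x y. ht (x + y) = ht x + ht y"
  shows "ht 0 = 0" "ht (- x) = - ht x" "ht ((k::int) *s x) = k * ht x"
    "ht (sum f A) = (\<Sum>j\<in>A. ht (f j))"
proof -
  show h0: "ht 0 = 0" using add[rule_format, of 0 0] by simp
  show hn: "ht (- y) = - ht y" for y using add[rule_format, of y "- y"] h0 by simp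
  have hnat: "ht ((of_nat m :: int) *s y) = of_nat m * ht y" for m y
  proof (induction m)
    case 0 then show ?case using h0 by (simp add: vec_eq_iff)
  next
    case (Suc m) then show ?case using add by (simp only: smult_Suc) (simp add: algebra_simps)
  qed
  show "ht (k *s x) = k * ht x"
  proof (cases "k \<ge> 0")
    case True
    then obtain m where "k = of_nat m" by (metis nonneg_int_cases)
    then show ?thesis using hnat by simp
  next
    case False
    then obtain m where m: "k = - of_nat m" by (metis nonpos_int_cases linorder_le_cases)
    have "k *s x = - ((of_nat m :: int) *s x)" unfolding m by (simp add: vec_eq_iff)
    then show ?thesis using hnat hn m by simp
  qed
  show "ht (sum f A) = (\<Sum>j\<in>A. ht (f j))"
    by (induction A rule: infinite_finite_induct) (simp_all add: h0 add)
qed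

lemma h_sum_zero:
  fixes ht :: "int^'d \<Rightarrow> int"
  assumes add: "\<forall>x y. ht (x + y) = ht x + ht y" and hv: "\<forall>j<n. ht (v j) = 1"
    and L: "in_L v n h"
  shows "(\<Sum>j<n. h j) = 0"
proof -
  have "(\<Sum>j<n. h j *s v j) = 0" using L by (simp add: in_L_def)
  then have z: "ht (\<Sum>j<n. h j *s v j) = 0" using ht_facts(1)[OF add] by simp
  have "ht (\<Sum>j<n. h j *s v j) = (\<Sum>j<n. h j * ht (v j))" by (subst ht_facts(4)[OF add]) (simp add: ht_facts(3)[OF add])
  also have "\<dots> = (\<Sum>j<n. h j)" by (rule sum.cong) (simp_all add: hv)
  finally show ?thesis using z by simp
qed

lemma h_signs:
  fixes h :: "nat \<Rightarrow> int"
  assumes s: "(\<Sum>j<n. h j) = (0::int)" and nz: "h \<noteq> (\<lambda>_. 0)" and z: "\<forall>j\<ge>n. h j = 0"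
  shows "\<exists>i. h i > 0" "\<exists>i. h i < 0"
proof -
  obtain k where k: "h k \<noteq> 0" using nz by auto
  have kn: "k < n"
  proof (rule ccontr)
    assume "\<not> k < n"
    then show False using k z by auto
  qed
  show "\<exists>i. h i > 0"
  proof (rule ccontr)
    assume "\<not> ?thesis"
    then have "\<forall>j\<in>{..<n}. 0 \<le> - h j" by (auto simp: not_less)
    moreover have "(\<Sum>j<n. - h j) = 0" using s by (simp add: sum_negf)
    ultimately have "\<forall>j\<in>{..<n}. - h j = 0" using sum_nonneg_eq_0_iff[of "{..<n}" "\<lambda>j. - h j"] by simp
    then show False using k kn by simp
  qed
  show "\<exists>i. h i < 0"
  proof (rule ccontr)
    assume "\<not> ?thesis"
    then have "\<forall>j\<in>{..<n}. 0 \<le> h j" by (auto simp: not_less)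
    then have "\<forall>j\<in>{..<n}. h j = 0" using s sum_nonneg_eq_0_iff[of "{..<n}" h] by simp
    then show False using k kn by simp
  qed
qed

lemma hrel_real:
  assumes L: "in_L v n h"
  shows "(\<Sum>j<n. real_of_int (h j) *\<^sub>R rv (v j)) = 0"
proof -
  have "rv (\<Sum>j<n. h j *s v j) = 0" using L by (simp add: in_L_def rv_zero)
  then show ?thesis by (simp add: rv_sum rv_smult)
qed

lemma circuit_contra:
  assumes fp: "fanprop v n T" and S: "S1 \<in> T" "S2 \<in> T"
    and L: "in_L v n g" and nz: "g \<noteq> (\<lambda>_. 0)"
    and P: "{j. g j > 0} \<subseteq> S1" and N: "{j. g j < 0} \<subseteq> S2"
  shows False
proof -
  define a where "a j = max (real_of_int (g j)) 0" for j
  define b where "b j = max (- real_of_int (g j)) 0" for j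
  have ab: "real_of_int (g j) = a j - b j" for j by (simp add: a_def b_def)
  have "(\<Sum>j<n. (a j - b j) *\<^sub>R rv (v j)) = 0" using hrel_real[OF L] by (simp add: ab)
  then have eq: "(\<Sum>j<n. a j *\<^sub>R rv (v j)) = (\<Sum>j<n. b j *\<^sub>R rv (v j))"
    by (simp add: scaleR_diff_left sum_subtractf)
  have "a j = b j" for j
  proof (rule tri_unique[OF fp S _ _ _ _ eq])
    show "\<forall>j. 0 \<le> a j" "\<forall>j. 0 \<le> b j" by (simp_all add: a_def b_def)
    show "\<forall>j. j \<notin> S1 \<longrightarrow> a j = 0"
    proof (intro allI impI)
      fix j assume "j \<notin> S1"
      then have "g j \<le> 0" using P by force
      then show "a j = 0" by (simp add: a_def)
    qed
    show "\<forall>j. j \<notin> S2 \<longrightarrow> b j = 0"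
    proof (intro allI impI)
      fix j assume "j \<notin> S2"
      then have "g j \<ge> 0" using N by force
      then show "b j = 0" by (simp add: b_def)
    qed
  qed
  then have "g j = 0" for j using ab[of j] by (simp add: a_def b_def max_def split: if_splits)
  then show False using nz by auto
qed

lemma es_support:
  assumes fp: "fanprop v n T" and ET: "E \<subseteq> T" and x: "x \<in> Box_es v n T E"
    and q: "box_rep v n T x q"
  shows "\<exists>S'\<in>E. \<forall>j. j \<notin> S' \<longrightarrow> q j = 0"
proof -
  obtain S' where S': "S' \<in> E" "sigma v T x face_of rcone v S'"
    using x unfolding Box_es_def by auto
  have "rv x \<in> rcone v S'" using face_of_imp_subset[OF S'(2)] in_sigma by blast
  then obtain c where c: "\<forall>j\<in>S'. 0 \<le> c j" "rv x = (\<Sum>j\<in>S'. c j *\<^sub>R rv (v j))"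
    unfolding rcone_def by auto
  obtain S where S: "S \<in> T" "\<forall>j. 0 \<le> q j \<and> q j < 1" "\<forall>j. j \<notin> S \<longrightarrow> q j = 0"
    "rv x = (\<Sum>j<n. q j *\<^sub>R rv (v j))"
    using q unfolding box_rep_def by auto
  have S'T: "S' \<in> T" using S'(1) ET by auto
  have S'n: "S' \<subseteq> {..<n}" using fp S'T by (auto simp: fanprop_def)
  define b where "b j = (if j \<in> S' then c j else 0)" for j
  have "(\<Sum>j<n. b j *\<^sub>R rv (v j)) = (\<Sum>j\<in>S'. b j *\<^sub>R rv (v j))"
    by (rule sum_restrict) (use S'n in \<open>auto simp: b_def\<close>)
  also have "\<dots> = rv x" unfolding c(2) by (rule sum.cong) (auto simp: b_def)
  finally have eqb: "(\<Sum>j<n. q j *\<^sub>R rv (v j)) = (\<Sum>j<n. b j *\<^sub>R rv (v j))" using S(4) by simp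
  have "q j = b j" for j
    by (rule tri_unique[OF fp S(1) S'T _ _ S(3) _ eqb]) (use S(2) c(1) in \<open>auto simp: b_def\<close>)
  then show ?thesis using S'(1) by (auto simp: b_def)
qed

lemma es_intro:
  assumes fp: "fanprop v n T" and ET: "E \<subseteq> T" and q: "box_rep v n T x q"
    and S': "S' \<in> E" "\<forall>j. j \<notin> S' \<longrightarrow> q j = 0"
  shows "x \<in> Box_es v n T E"
proof -
  obtain S where S: "S \<in> T" "\<forall>j. 0 \<le> q j \<and> q j < 1" "\<forall>j. j \<notin> S \<longrightarrow> q j = 0"
    "rv x = (\<Sum>j<n. q j *\<^sub>R rv (v j))"
    using q unfolding box_rep_def by auto
  have sg: "sigma v T x = rcone v {j. q j \<noteq> 0}"
    by (rule sigma_eq[OF fp S(1) _ S(3) S(4)]) (use S(2) in auto)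
  have S'T: "S' \<in> T" using S'(1) ET by auto
  have li: "lin_indep_idx v S'" and S'n: "S' \<subseteq> {..<n}" using fp S'T by (auto simp: fanprop_def)
  have fin: "finite S'" using finite_subset[OF S'n finite_lessThan] .
  have "{j. q j \<noteq> 0} \<subseteq> S'" using S'(2) by auto
  then have "sigma v T x face_of rcone v S'" unfolding sg by (rule rcone_face[OF li fin])
  then have ex: "\<exists>S\<in>E. sigma v T x face_of rcone v S" using S'(1) by (rule_tac bexI)
  have bx: "x \<in> Box v n T" unfolding Box_def using q by (intro CollectI exI)
  show ?thesis unfolding Box_es_def using bx ex by (intro CollectI conjI)
qed


lemma part1_gen:
  fixes g :: "nat \<Rightarrow> int"
  assumes fp1: "fanprop v n T1" and fp2: "fanprop v n T2"
    and L: "in_L v n g" and nz: "g \<noteq> (\<lambda>_. 0)" and pos: "\<exists>i. g i > 0"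
    and E1T: "E1 \<subseteq> T1" and E2T: "E2 \<subseteq> T2" and T12: "T1 - E1 \<subseteq> T2"
    and sep1: "\<And>F j. sep F \<Longrightarrow> g j > 0 \<Longrightarrow> F \<union> (I - {j}) \<in> E1"
    and E2c: "\<And>S'. S' \<in> E2 \<Longrightarrow> \<exists>F j. S' = F \<union> (I - {j}) \<and> sep F \<and> g j < 0"
    and I: "I = {j. g j \<noteq> 0}"
    and x: "x \<notin> Box_es v n T1 E1" and q: "box_rep v n T1 x q"
  shows "box_rep v n T2 x q \<and> x \<in> Box v n T2 \<and> x \<notin> Box_es v n T2 E2"
proof -
  obtain S where S: "S \<in> T1" "\<forall>j. 0 \<le> q j \<and> q j < 1" "\<forall>j. j \<notin> S \<longrightarrow> q j = 0"
    "rv x = (\<Sum>j<n. q j *\<^sub>R rv (v j))"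
    using q unfolding box_rep_def by auto
  have "S \<notin> E1"
  proof
    assume "S \<in> E1"
    then have "x \<in> Box_es v n T1 E1" by (rule es_intro[OF fp1 E1T q _ S(3)])
    then show False using x by simp
  qed
  then have ST2: "S \<in> T2" using S(1) T12 by blast
  have q2: "box_rep v n T2 x q" unfolding box_rep_def using ST2 S(2-4) by blast
  have bx: "x \<in> Box v n T2" unfolding Box_def using q2 by (intro CollectI exI)
  have "x \<notin> Box_es v n T2 E2"
  proof
    assume "x \<in> Box_es v n T2 E2"
    from es_support[OF fp2 E2T this q2] obtain S' where S': "S' \<in> E2" "\<forall>j. j \<notin> S' \<longrightarrow> q j = 0"
      by blast
    from E2c[OF S'(1)] obtain F j where F: "S' = F \<union> (I - {j})" "sep F" "g j < 0" by blast
    have allpos: "q i \<noteq> 0" if gi: "g i > 0" for i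
    proof
      assume qi: "q i = 0"
      have E: "F \<union> (I - {i}) \<in> E1" by (rule sep1[OF F(2) gi])
      have "\<forall>k. k \<notin> F \<union> (I - {i}) \<longrightarrow> q k = 0"
      proof (intro allI impI)
        fix k assume k: "k \<notin> F \<union> (I - {i})"
        show "q k = 0"
        proof (cases "k = i")
          case True then show ?thesis using qi by simp
        next
          case False
          then have "k \<notin> S'" using k F(1) by auto
          then show ?thesis using S'(2) by simp
        qed
      qed
      then have "x \<in> Box_es v n T1 E1" by (rule es_intro[OF fp1 E1T q E])
      then show False using x by simp
    qed
    have P: "{j. g j > 0} \<subseteq> S"
    proof
      fix i assume "i \<in> {j. g j > 0}"
      then have "q i \<noteq> 0" using allpos by simp
      then show "i \<in> S" using S(3) by blast
    qed
    obtain i0 where i0: "g i0 > 0" using pos by blast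
    have S1: "F \<union> (I - {i0}) \<in> T1" using sep1[OF F(2) i0] E1T by blast
    have N: "{j. g j < 0} \<subseteq> F \<union> (I - {i0})" using i0 I by auto
    show False by (rule circuit_contra[OF fp1 S(1) S1 L nz P N])
  qed
  then show ?thesis using q2 bx by blast
qed

lemma shift:
  fixes g :: "nat \<Rightarrow> int" and q :: "nat \<Rightarrow> real" and tau :: real
  assumes L: "in_L v n g" and x: "rv x = (\<Sum>j<n. q j *\<^sub>R rv (v j))"
  shows "rv (x - (\<Sum>j<n. floor (q j + tau * g j) *s v j)) = (\<Sum>j<n. frac (q j + tau * g j) *\<^sub>R rv (v j))"
    and "0 \<le> frac (q j + tau * g j)" "frac (q j + tau * g j) < 1"
    and "yv (\<lambda>j. frac (q j + tau * g j)) j = yv q j * cis (2 * pi * tau * g j)"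
proof -
  have h0: "(\<Sum>j<n. (tau * g j) *\<^sub>R rv (v j)) = 0"
  proof -
    have "(\<Sum>j<n. (tau * g j) *\<^sub>R rv (v j)) = tau *\<^sub>R (\<Sum>j<n. real_of_int (g j) *\<^sub>R rv (v j))"
      by (simp add: scaleR_sum_right)
    then show ?thesis using hrel_real[OF L] by simp
  qed
  have "rv (x - (\<Sum>j<n. floor (q j + tau * g j) *s v j))
      = (\<Sum>j<n. q j *\<^sub>R rv (v j)) - (\<Sum>j<n. of_int (floor (q j + tau * g j)) *\<^sub>R rv (v j))"
    by (simp add: rv_diff rv_sum rv_smult x)
  also have "\<dots> = (\<Sum>j<n. (q j + tau * g j) *\<^sub>R rv (v j)) - (\<Sum>j<n. of_int (floor (q j + tau * g j)) *\<^sub>R rv (v j))"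
    using h0 by (simp add: scaleR_add_left sum.distrib)
  also have "\<dots> = (\<Sum>j<n. frac (q j + tau * g j) *\<^sub>R rv (v j))"
    by (simp add: frac_def scaleR_diff_left sum_subtractf)
  finally show "rv (x - (\<Sum>j<n. floor (q j + tau * g j) *s v j)) = (\<Sum>j<n. frac (q j + tau * g j) *\<^sub>R rv (v j))" .
  show "0 \<le> frac (q j + tau * g j)" "frac (q j + tau * g j) < 1" by (simp_all add: frac_lt_1)
  define r where "r = q j + tau * g j"
  have c1: "cis (2 * pi * of_int (floor r)) = 1" by (rule cis_multiple_2pi) simp
  have "cis (2 * pi * frac r) * cis (2 * pi * of_int (floor r)) = cis (2 * pi * r)"
    by (simp add: cis_mult frac_def algebra_simps)
  then have "cis (2 * pi * frac r) = cis (2 * pi * r)" using c1 by simp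
  also have "\<dots> = cis (2 * pi * q j) * cis (2 * pi * tau * g j)"
    by (simp add: cis_mult r_def algebra_simps)
  finally show "yv (\<lambda>j. frac (q j + tau * g j)) j = yv q j * cis (2 * pi * tau * g j)"
    by (simp add: yv_def r_def)
qed


lemma powi_eq1:
  fixes r :: real
  assumes "0 \<le> r" "r powi m = 1" "m \<noteq> 0"
  shows "r = 1"
proof -
  have "r ^ nat \<bar>m\<bar> = 1"
  proof (cases "m \<ge> 0")
    case True then show ?thesis using assms(2) by (simp add: power_int_def)
  next
    case False
    then have "inverse r ^ nat (-m) = 1" using assms(2) by (simp add: power_int_def)
    then show ?thesis using False by (simp add: power_inverse)
  qed
  moreover have "nat \<bar>m\<bar> \<noteq> 0" using assms(3) by simp
  ultimately show "r = 1" using power_eq_1_iff[of r "nat \<bar>m\<bar>"] assms(1) by auto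
qed

lemma norm_yv: "cmod (yv q j) = 1"
  by (simp add: yv_def)

theorem proposition4p4:
  fixes v :: "nat \<Rightarrow> int^'d::finite" and n :: nat
    and ht :: "int^'d \<Rightarrow> int" and h :: "nat \<Rightarrow> int"
    and Tp Tm :: "nat set set"
  assumes inj: "inj_on v {..<n}"
    and gen: "\<forall>x. \<exists>c::nat \<Rightarrow> int. x = (\<Sum>j<n. c j *s v j)"
    and ht_hom: "\<forall>x y. ht (x + y) = ht x + ht y"
    and ht_v: "\<forall>j<n. ht (v j) = 1"
    and regp: "is_regular_triangulation v n Tp"
    and regm: "is_regular_triangulation v n Tm"
    and edge: "secondary_edge v n Tp Tm"
    and hprim: "primitive_in_L v n h"
    and circ: "is_circuit v {j. h j \<noteq> 0}"
    and flip: "Tm = (Tp - essential_plus n h Tp Tm) \<union> essential_minus n h Tp Tm"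
  shows
    "(Box v n Tp - Box_es v n Tp (essential_plus n h Tp Tm)
        = Box v n Tm - Box_es v n Tm (essential_minus n h Tp Tm)) \<and>
     (\<forall>x \<in> Box v n Tp - Box_es v n Tp (essential_plus n h Tp Tm).
        sigma v Tp x = sigma v Tm x \<and>
        (\<forall>q q'. box_rep v n Tp x q \<and> box_rep v n Tm x q' \<longrightarrow> (\<forall>j<n. yv q j = yv q' j))) \<and>
     (\<forall>x \<in> Box_es v n Tp (essential_plus n h Tp Tm). \<forall>q. box_rep v n Tp x q \<longrightarrow>
        (\<forall>t \<in> Ical n h (yv q).
           \<exists>x' \<in> Box_es v n Tm (essential_minus n h Tp Tm). \<exists>q'. box_rep v n Tm x' q' \<and>
             (\<forall>j<n. yv q j * t powi h j = yv q' j))) \<and>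
     (\<forall>x' \<in> Box_es v n Tm (essential_minus n h Tp Tm). \<forall>q'. box_rep v n Tm x' q' \<longrightarrow>
        (\<exists>x \<in> Box_es v n Tp (essential_plus n h Tp Tm). \<exists>q. box_rep v n Tp x q \<and>
           (\<exists>t \<in> Ical n h (yv q). \<forall>j<n. yv q j * t powi h j = yv q' j)))"
proof -
  define I where "I = {j. h j \<noteq> 0}"
  define Ep where "Ep = essential_plus n h Tp Tm"
  define Em where "Em = essential_minus n h Tp Tm"
  have fpP: "fanprop v n Tp" using regp tri_fanprop unfolding is_regular_triangulation_def by blast
  have fpM: "fanprop v n Tm" using regm tri_fanprop unfolding is_regular_triangulation_def by blast
  have L: "in_L v n h" and nz: "h \<noteq> (\<lambda>_. 0)" using hprim by (auto simp: primitive_in_L_def)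
  have hn: "\<forall>j\<ge>n. h j = 0" using L by (simp add: in_L_def)
  have hs: "(\<Sum>j<n. h j) = 0" by (rule h_sum_zero[OF ht_hom ht_v L])
  obtain ipos where ipos: "h ipos > 0" using h_signs(1)[OF hs nz hn] by blast
  obtain ineg where ineg: "h ineg < 0" using h_signs(2)[OF hs nz hn] by blast
  have Ep_char: "S \<in> Ep \<longleftrightarrow> (\<exists>F j. S = F \<union> (I - {j}) \<and> separating n h Tp Tm F \<and> h j > 0)" for S
    unfolding Ep_def essential_plus_def I_def Iplus_def by blast
  have Em_char: "S \<in> Em \<longleftrightarrow> (\<exists>F j. S = F \<union> (I - {j}) \<and> separating n h Tp Tm F \<and> h j < 0)" for S
    unfolding Em_def essential_minus_def I_def Iminus_def by blast
  have sepP: "F \<union> (I - {j}) \<in> Tp" if s1: "separating n h Tp Tm F" and s2: "h j > 0" for F j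
  proof -
    have "\<forall>j\<in>Iplus h. F \<union> ({j. h j \<noteq> 0} - {j}) \<in> Tp" using s1 by (simp add: separating_def)
    moreover have "j \<in> Iplus h" using s2 by (simp add: Iplus_def)
    ultimately show ?thesis unfolding I_def by (rule bspec)
  qed
  have sepM: "F \<union> (I - {j}) \<in> Tm" if s1: "separating n h Tp Tm F" and s2: "h j < 0" for F j
  proof -
    have "\<forall>j\<in>Iminus h. F \<union> ({j. h j \<noteq> 0} - {j}) \<in> Tm" using s1 by (simp add: separating_def)
    moreover have "j \<in> Iminus h" using s2 by (simp add: Iminus_def)
    ultimately show ?thesis unfolding I_def by (rule bspec)
  qed
  have sepF: "F \<inter> I = {}" if s1: "separating n h Tp Tm F" for F
  proof -
    have "F \<subseteq> {..<n} - {j. h j \<noteq> 0}" using s1 by (simp add: separating_def)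
    then show ?thesis unfolding I_def by auto
  qed
  have EpT: "Ep \<subseteq> Tp"
  proof
    fix S assume "S \<in> Ep"
    then obtain F j where "S = F \<union> (I - {j})" "separating n h Tp Tm F" "h j > 0"
      unfolding Ep_char by blast
    then show "S \<in> Tp" using sepP by simp
  qed
  have EmT: "Em \<subseteq> Tm"
  proof
    fix S assume "S \<in> Em"
    then obtain F j where "S = F \<union> (I - {j})" "separating n h Tp Tm F" "h j < 0"
      unfolding Em_char by blast
    then show "S \<in> Tm" using sepM by simp
  qed
  have fl: "Tm = (Tp - Ep) \<union> Em" using flip unfolding Ep_def Em_def .
  have TpTm: "Tp - Ep \<subseteq> Tm" using equalityD2[OF fl] by (simp add: Un_subset_iff)
  have TmTp: "Tm - Em \<subseteq> Tp"
  proof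
    fix S assume "S \<in> Tm - Em"
    then have "S \<in> (Tp - Ep) \<union> Em" "S \<notin> Em" using equalityD1[OF fl] by auto
    then show "S \<in> Tp" by simp
  qed
  have Ineg: "I = {j. - h j \<noteq> 0}" unfolding I_def by simp
  have neg_s: "(- k) *s y = - (k *s y)" for k :: int and y :: "int^'d" by (simp add: vec_eq_iff)
  have Lneg: "in_L v n (\<lambda>j. - h j)" using L by (simp add: in_L_def sum_negf neg_s)
  have nzneg: "(\<lambda>j. - h j) \<noteq> (\<lambda>_. 0)" using nz by (metis minus_equation_iff neg_0_equal_iff_equal)
  have fwd: "box_rep v n Tm x q \<and> x \<in> Box v n Tm \<and> x \<notin> Box_es v n Tm Em"
    if "x \<notin> Box_es v n Tp Ep" "box_rep v n Tp x q" for x q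
  proof (rule part1_gen[OF fpP fpM L nz _ EpT EmT TpTm _ _ _ that, where sep = "separating n h Tp Tm"])
    show "\<exists>i. h i > 0" using ipos by blast
    show "I = {j. h j \<noteq> 0}" by (rule I_def)
    show "F \<union> (I - {j}) \<in> Ep" if "separating n h Tp Tm F" "h j > 0" for F j
      using Ep_char that by blast
    show "\<exists>F j. S' = F \<union> (I - {j}) \<and> separating n h Tp Tm F \<and> h j < 0" if "S' \<in> Em" for S'
      using Em_char that by blast
  qed
  have bwd: "box_rep v n Tp x q \<and> x \<in> Box v n Tp \<and> x \<notin> Box_es v n Tp Ep"
    if "x \<notin> Box_es v n Tm Em" "box_rep v n Tm x q" for x q
  proof (rule part1_gen[OF fpM fpP Lneg nzneg _ EmT EpT TmTp _ _ Ineg that, where sep = "separating n h Tp Tm"])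
    show "\<exists>i. - h i > 0" using ineg by auto
    show "F \<union> (I - {j}) \<in> Em" if "separating n h Tp Tm F" "- h j > 0" for F j
      using Em_char that by auto
    show "\<exists>F j. S' = F \<union> (I - {j}) \<and> separating n h Tp Tm F \<and> - h j < 0" if "S' \<in> Ep" for S'
      using Ep_char that by auto
  qed
  have P1: "Box v n Tp - Box_es v n Tp Ep = Box v n Tm - Box_es v n Tm Em"
  proof (intro equalityI subsetI)
    fix x assume x: "x \<in> Box v n Tp - Box_es v n Tp Ep"
    then obtain q where "box_rep v n Tp x q" unfolding Box_def by auto
    then show "x \<in> Box v n Tm - Box_es v n Tm Em" using fwd x by blast
  next
    fix x assume x: "x \<in> Box v n Tm - Box_es v n Tm Em"
    then obtain q where "box_rep v n Tm x q" unfolding Box_def by auto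
    then show "x \<in> Box v n Tp - Box_es v n Tp Ep" using bwd x by blast
  qed
  have P2: "sigma v Tp x = sigma v Tm x \<and>
        (\<forall>q q'. box_rep v n Tp x q \<and> box_rep v n Tm x q' \<longrightarrow> (\<forall>j<n. yv q j = yv q' j))"
    if x: "x \<in> Box v n Tp - Box_es v n Tp Ep" for x
  proof -
    obtain q where q: "box_rep v n Tp x q" using x unfolding Box_def by auto
    have qm: "box_rep v n Tm x q" using fwd q x by blast
    have sg: "sigma v T x = rcone v {j. q j \<noteq> 0}" if fT: "fanprop v n T" and bT: "box_rep v n T x q" for T
    proof -
      obtain S where S: "S \<in> T" "\<forall>j. 0 \<le> q j \<and> q j < 1" "\<forall>j. j \<notin> S \<longrightarrow> q j = 0"
        "rv x = (\<Sum>j<n. q j *\<^sub>R rv (v j))"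
        using bT unfolding box_rep_def by auto
      show ?thesis by (rule sigma_eq[OF fT S(1) _ S(3) S(4)]) (use S(2) in auto)
    qed
    have "sigma v Tp x = sigma v Tm x" using sg[OF fpP q] sg[OF fpM qm] by simp
    moreover have "\<forall>j<n. yv q1 j = yv q2 j" if qq: "box_rep v n Tp x q1 \<and> box_rep v n Tm x q2" for q1 q2
    proof -
      have q1: "box_rep v n Tm x q1" using fwd qq x by blast
      obtain S1 where S1: "S1 \<in> Tm" "\<forall>j. 0 \<le> q1 j \<and> q1 j < 1" "\<forall>j. j \<notin> S1 \<longrightarrow> q1 j = 0"
        "rv x = (\<Sum>j<n. q1 j *\<^sub>R rv (v j))"
        using q1 unfolding box_rep_def by auto
      obtain S2 where S2: "S2 \<in> Tm" "\<forall>j. 0 \<le> q2 j \<and> q2 j < 1" "\<forall>j. j \<notin> S2 \<longrightarrow> q2 j = 0"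
        "rv x = (\<Sum>j<n. q2 j *\<^sub>R rv (v j))"
        using qq unfolding box_rep_def by auto
      have "q1 j = q2 j" for j
        by (rule tri_unique[OF fpM S1(1) S2(1) _ _ S1(3) S2(3)]) (use S1 S2 in auto)
      then show ?thesis by (simp add: yv_def)
    qed
    ultimately show ?thesis by blast
  qed
  have P3: "\<exists>x' \<in> Box_es v n Tm Em. \<exists>q'. box_rep v n Tm x' q' \<and> (\<forall>j<n. yv q j * t powi h j = yv q' j)"
    if x: "x \<in> Box_es v n Tp Ep" and q: "box_rep v n Tp x q" and t: "t \<in> Ical n h (yv q)" for x q t
  proof -
    obtain S where S: "S \<in> Tp" "\<forall>j. 0 \<le> q j \<and> q j < 1" "\<forall>j. j \<notin> S \<longrightarrow> q j = 0"
      "rv x = (\<Sum>j<n. q j *\<^sub>R rv (v j))"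
      using q unfolding box_rep_def by auto
    obtain S' where S': "S' \<in> Ep" "\<forall>j. j \<notin> S' \<longrightarrow> q j = 0"
      using es_support[OF fpP EpT x q] by blast
    obtain F i where F: "S' = F \<union> (I - {i})" "separating n h Tp Tm F" "h i > 0"
      using S'(1) unfolding Ep_char by blast
    obtain j where j: "t \<noteq> 0" "j < n" "h j < 0" "yv q j * t powi h j = 1"
      using t unfolding Ical_def by blast
    have "cmod (yv q j * t powi h j) = 1" using j(4) by simp
    then have "cmod t powi h j = 1" by (simp add: norm_mult norm_yv norm_power_int)
    then have nt: "cmod t = 1" by (rule powi_eq1[OF norm_ge_zero]) (use j(3) in simp)
    define tau where "tau = Arg t / (2 * pi)"
    have tc: "t = cis (2 * pi * tau)"
    proof -
      have "t = rcis (cmod t) (Arg t)" by (simp add: rcis_cmod_Arg)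
      also have "\<dots> = cis (Arg t)" using nt by (simp add: rcis_def)
      finally show ?thesis by (simp add: tau_def)
    qed
    have tpow: "t powi m = cis (2 * pi * tau * m)" for m
      unfolding tc cis_power_int by (simp add: algebra_simps)
    have "cis (2 * pi * (q j + tau * h j)) = yv q j * t powi h j"
      unfolding tpow yv_def by (simp add: cis_mult algebra_simps)
    then have "cis (2 * pi * (q j + tau * h j)) = 1" using j(4) by simp
    then obtain k :: int where "2 * pi * (q j + tau * h j) = of_int k * (2 * pi)"
      unfolding cis_eq_1_iff by blast
    then have "q j + tau * h j = of_int k" by simp
    then have fj: "frac (q j + tau * h j) = 0" by simp
    define q' where "q' = (\<lambda>k. frac (q k + tau * h k))"
    define x' where "x' = x - (\<Sum>k<n. floor (q k + tau * h k) *s v k)"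
    have rx': "rv x' = (\<Sum>k<n. q' k *\<^sub>R rv (v k))"
      unfolding x'_def q'_def by (rule shift(1)[OF L S(4)])
    have qb: "\<forall>k. 0 \<le> q' k \<and> q' k < 1" unfolding q'_def using shift(2,3)[OF L S(4)] by blast
    have yq: "yv q' k = yv q k * cis (2 * pi * tau * h k)" for k
      unfolding q'_def by (rule shift(4)[OF L S(4)])
    define S'' where "S'' = F \<union> (I - {j})"
    have S''E: "S'' \<in> Em" unfolding S''_def Em_char using F(2) j(3) by blast
    have S''T: "S'' \<in> Tm" using S''E EmT by blast
    have z: "\<forall>k. k \<notin> S'' \<longrightarrow> q' k = 0"
    proof (intro allI impI)
      fix k assume k: "k \<notin> S''"
      show "q' k = 0"
      proof (cases "k = j")
        case True then show ?thesis using fj by (simp add: q'_def)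
      next
        case False
        then have "k \<notin> F" "k \<notin> I" using k by (auto simp: S''_def)
        then have "h k = 0" "k \<notin> S'" using F(1) by (auto simp: I_def)
        then show ?thesis using S'(2) by (simp add: q'_def)
      qed
    qed
    have br: "box_rep v n Tm x' q'" unfolding box_rep_def using S''T qb z rx' by blast
    have "x' \<in> Box_es v n Tm Em" by (rule es_intro[OF fpM EmT br S''E z])
    moreover have "\<forall>k<n. yv q k * t powi h k = yv q' k" using yq tpow by simp
    ultimately show ?thesis using br by blast
  qed
  have P4: "\<exists>x \<in> Box_es v n Tp Ep. \<exists>q. box_rep v n Tp x q \<and>
           (\<exists>t \<in> Ical n h (yv q). \<forall>j<n. yv q j * t powi h j = yv q' j)"
    if x': "x' \<in> Box_es v n Tm Em" and q': "box_rep v n Tm x' q'" for x' q'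
  proof -
    obtain S where S: "S \<in> Tm" "\<forall>j. 0 \<le> q' j \<and> q' j < 1" "\<forall>j. j \<notin> S \<longrightarrow> q' j = 0"
      "rv x' = (\<Sum>j<n. q' j *\<^sub>R rv (v j))"
      using q' unfolding box_rep_def by auto
    obtain S' where S': "S' \<in> Em" "\<forall>j. j \<notin> S' \<longrightarrow> q' j = 0"
      using es_support[OF fpM EmT x' q'] by blast
    obtain F j where F: "S' = F \<union> (I - {j})" "separating n h Tp Tm F" "h j < 0"
      using S'(1) unfolding Em_char by blast
    have jn: "j < n"
    proof (rule ccontr)
      assume "\<not> j < n"
      then have "h j = 0" using hn by simp
      then show False using F(3) by simp
    qed
    have jI: "j \<in> I" using F(3) by (simp add: I_def)
    have q'j: "q' j = 0"
    proof -
      have "j \<notin> F" using sepF[OF F(2)] jI by blast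
      then have "j \<notin> S'" using F(1) by blast
      then show ?thesis using S'(2) by blast
    qed
    define tau where "tau = q' ipos / h ipos"
    define q where "q = (\<lambda>k. frac (q' k + (- tau) * h k))"
    define x where "x = x' - (\<Sum>k<n. floor (q' k + (- tau) * h k) *s v k)"
    have rx: "rv x = (\<Sum>k<n. q k *\<^sub>R rv (v k))"
      unfolding x_def q_def by (rule shift(1)[OF L S(4)])
    have qb: "\<forall>k. 0 \<le> q k \<and> q k < 1" unfolding q_def using shift(2,3)[OF L S(4)] by blast
    have yq: "yv q k = yv q' k * cis (2 * pi * (- tau) * h k)" for k
      unfolding q_def by (rule shift(4)[OF L S(4)])
    have qi: "q ipos = 0" using ipos by (simp add: q_def tau_def)
    define S'' where "S'' = F \<union> (I - {ipos})"
    have S''E: "S'' \<in> Ep" unfolding S''_def Ep_char using F(2) ipos by blast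
    have S''T: "S'' \<in> Tp" using S''E EpT by blast
    have z: "\<forall>k. k \<notin> S'' \<longrightarrow> q k = 0"
    proof (intro allI impI)
      fix k assume k: "k \<notin> S''"
      show "q k = 0"
      proof (cases "k = ipos")
        case True then show ?thesis using qi by simp
      next
        case False
        then have "k \<notin> F" "k \<notin> I" using k by (auto simp: S''_def)
        then have "h k = 0" "k \<notin> S'" using F(1) by (auto simp: I_def)
        then show ?thesis using S'(2) by (simp add: q_def)
      qed
    qed
    have br: "box_rep v n Tp x q" unfolding box_rep_def using S''T qb z rx by blast
    have xe: "x \<in> Box_es v n Tp Ep" by (rule es_intro[OF fpP EpT br S''E z])
    define t where "t = cis (2 * pi * tau)"
    have tpow: "t powi m = cis (2 * pi * tau * m)" for m
      unfolding t_def cis_power_int by (simp add: algebra_simps)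
    have eq: "yv q k * t powi h k = yv q' k" for k
    proof -
      have "yv q k * t powi h k = yv q' k * (cis (2 * pi * (- tau) * h k) * cis (2 * pi * tau * h k))"
        unfolding yq tpow by (simp add: mult.assoc)
      also have "\<dots> = yv q' k" by (simp add: cis_mult)
      finally show ?thesis .
    qed
    have "t \<in> Ical n h (yv q)"
    proof -
      have "yv q j * t powi h j = 1" using eq[of j] q'j by (simp add: yv_def)
      moreover have "t \<noteq> 0" by (simp add: t_def)
      ultimately show ?thesis unfolding Ical_def using jn F(3) by blast
    qed
    then show ?thesis using xe br eq by blast
  qed
  show ?thesis unfolding Ep_def[symmetric] Em_def[symmetric] using P1 P2 P3 P4 by blast
qed

end
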